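(* Fix $s,b\ge1$ and let $\{a_i\}$ be the $(s,b)$-Generacci sequence, with $a_i=0$ for $i\le0$. For $n,k\ge0$ let $p_{n,k}$ be the number of $m\in[a_{(n-1)b+1},a_{nb+1})$ whose legal decomposition has exactly $k$ summands, and $q_{n,k}$ the number of $m\in[0,a_{nb+1})$ whose legal decomposition has exactly $k$ summands. Then \[p_{n,k}=\begin{cases}1 & n=k=0,\\ b & 1\le n\le s,\ k=1,\\ b\,q_{n-(s+1),k-1} & n\ge s+1,\ 1\le k\le \frac{n+s}{s+1},\\ 0&\text{otherwise.}\end{cases}\] Moreover, with $n_*=\lceil\frac{n+s}{s+1}\rceil$, the generating function $F(x,y)=\sum_{n\ge0}\sum_{k=0}^{n_*}p_{n,k}x^ny^k$ equals \[F(x,y)=1+\frac{byx}{1-x-byx^{s+1}}.\]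
   Context: Fix integers $s,b\ge1$. For an increasing sequence of positive integers $\{a_i\}_{i\ge1}$ define bins $\mathcal{B}_n=\{a_{b(n-1)+1},\dots,a_{bn}\}$ for $n\ge1$, $\mathcal{B}_j=\emptyset$ for $j\le0$. A decomposition $m=a_{\ell_1}+\dots+a_{\ell_k}$ with $a_{\ell_1}>\dots>a_{\ell_k}$ is an $(s,b)$-Generacci legal decomposition if $\{a_{\ell_i},a_{\ell_{i+1}}\}\not\subset\mathcal{B}_{j-s}\cup\dots\cup\mathcal{B}_j$ for all $i,j$. The $(s,b)$-Generacci sequence is the increasing sequence in which each $a_i$ is the smallest positive integer with no legal decomposition using $a_1,\dots,a_{i-1}$; every nonnegative integer has a unique legal decomposition ($0$ being the empty sum). *)

theory Defs
  imports Main "HOL-Computational_Algebra.Formal_Power_Series"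
begin

text \<open>The sequence is a function a :: nat => nat, of which only the values
  at indices i >= 1 are relevant.  Extension by 0 to all integer indices i <= 0:\<close>
definition gen_at :: "(nat \<Rightarrow> nat) \<Rightarrow> int \<Rightarrow> nat" where
  "gen_at a i = (if i \<le> 0 then 0 else a (nat i))"

definition gbin :: "nat \<Rightarrow> (nat \<Rightarrow> nat) \<Rightarrow> int \<Rightarrow> nat set" where
  "gbin b a n = (if n \<le> 0 then {}
     else {a i | i. int b * (n - 1) + 1 \<le> int i \<and> int i \<le> int b * n})"

definition legal_dec :: "nat \<Rightarrow> nat \<Rightarrow> (nat \<Rightarrow> nat) \<Rightarrow> nat list \<Rightarrow> bool" where
  "legal_dec s b a ls \<longleftrightarrow>
     (\<forall>i\<in>set ls. 1 \<le> i) \<and>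
     sorted_wrt (>) (map a ls) \<and>
     (\<forall>i. i + 1 < length ls \<longrightarrow>
        (\<forall>j::int. \<not> ({a (ls ! i), a (ls ! (i + 1))} \<subseteq> (\<Union>t\<in>{j - int s..j}. gbin b a t))))"

definition has_legal_dec_below :: "nat \<Rightarrow> nat \<Rightarrow> (nat \<Rightarrow> nat) \<Rightarrow> nat \<Rightarrow> nat \<Rightarrow> bool" where
  "has_legal_dec_below s b a i m \<longleftrightarrow>
     (\<exists>ls. legal_dec s b a ls \<and> set ls \<subseteq> {1..<i} \<and> sum_list (map a ls) = m)"

definition is_generacci :: "nat \<Rightarrow> nat \<Rightarrow> (nat \<Rightarrow> nat) \<Rightarrow> bool" where
  "is_generacci s b a \<longleftrightarrow>
     (\<forall>i j. 1 \<le> i \<longrightarrow> i < j \<longrightarrow> a i < a j) \<and>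
     (\<forall>i. 1 \<le> i \<longrightarrow> a i = (LEAST m. 0 < m \<and> \<not> has_legal_dec_below s b a i m))"

definition dec_len :: "nat \<Rightarrow> nat \<Rightarrow> (nat \<Rightarrow> nat) \<Rightarrow> nat \<Rightarrow> nat \<Rightarrow> bool" where
  "dec_len s b a m k \<longleftrightarrow>
     (\<exists>ls. legal_dec s b a ls \<and> sum_list (map a ls) = m \<and> length ls = k)"

definition gen_p :: "nat \<Rightarrow> nat \<Rightarrow> (nat \<Rightarrow> nat) \<Rightarrow> nat \<Rightarrow> nat \<Rightarrow> nat" where
  "gen_p s b a n k = card {m. gen_at a ((int n - 1) * int b + 1) \<le> m \<and>
                            m < gen_at a (int n * int b + 1) \<and> dec_len s b a m k}"

definition gen_q :: "nat \<Rightarrow> nat \<Rightarrow> (nat \<Rightarrow> nat) \<Rightarrow> nat \<Rightarrow> nat \<Rightarrow> nat" where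
  "gen_q s b a n k = card {m. m < gen_at a (int n * int b + 1) \<and> dec_len s b a m k}"

end

theory Submission
  imports Defs
begin


definition binof :: "nat \<Rightarrow> nat \<Rightarrow> nat" where
  "binof b l = (l + b - 1) div b"

lemma binof_le_iff: "1 \<le> b \<Longrightarrow> binof b y \<le> q \<longleftrightarrow> y \<le> b * q"
proof -
  assume b: "1 \<le> b"
  have "binof b y \<le> q \<longleftrightarrow> (y + b - 1) div b < Suc q" unfolding binof_def by auto
  also have "\<dots> \<longleftrightarrow> y + b - 1 < Suc q * b" using b by (simp add: div_less_iff_less_mult)
  also have "\<dots> \<longleftrightarrow> y \<le> b * q" using b by (auto simp: algebra_simps)
  finally show ?thesis .
qed

lemma binof_int_iff:
  assumes "1 \<le> b" "1 \<le> l"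
  shows "(0 < t \<and> int b * (t - 1) + 1 \<le> int l \<and> int l \<le> int b * t) \<longleftrightarrow> t = int (binof b l)"
proof -
  have A: "\<And>q::nat. binof b l \<le> q \<longleftrightarrow> l \<le> b * q" using binof_le_iff assms by blast
  show ?thesis
  proof
    assume h: "0 < t \<and> int b * (t - 1) + 1 \<le> int l \<and> int l \<le> int b * t"
    then obtain q where q: "t = int (Suc q)" by (metis gr0_implies_Suc pos_int_cases zero_less_imp_eq_int)
    have "l \<le> b * Suc q" using h q by (metis of_nat_le_iff of_nat_mult)
    moreover have "int (b * q) < int l" using h q by (simp add: algebra_simps)
    hence "\<not> l \<le> b * q" by linarith
    ultimately have "binof b l = Suc q" using A[of q] A[of "Suc q"] by auto
    thus "t = int (binof b l)" using q by simp
  next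
    assume t: "t = int (binof b l)"
    have "binof b l \<noteq> 0" using A[of 0] assms by auto
    then obtain q where q: "binof b l = Suc q" by (metis not0_implies_Suc)
    have "l \<le> b * Suc q" "\<not> l \<le> b * q" using A[of q] A[of "Suc q"] q by auto
    hence "int l \<le> int b * (int q + 1)" "int b * int q < int l"
      by (metis of_nat_le_iff of_nat_mult of_nat_Suc add.commute, metis not_le of_nat_less_iff of_nat_mult)
    then show "0 < t \<and> int b * (t - 1) + 1 \<le> int l \<and> int l \<le> int b * t"
      using t q by (simp add: add.commute)
  qed
qed

lemma binof_mono: "x \<le> y \<Longrightarrow> binof b x \<le> binof b y"
  unfolding binof_def by (simp add: div_le_mono)

fun okl :: "nat \<Rightarrow> nat \<Rightarrow> nat list \<Rightarrow> bool" where
  "okl s b [] = True"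
| "okl s b [x] = (1 \<le> x)"
| "okl s b (x # y # r) = (1 \<le> x \<and> binof b y + s + 1 \<le> binof b x \<and> okl s b (y # r))"

lemma all_nat_split: "(\<forall>i::nat. P i) \<longleftrightarrow> P 0 \<and> (\<forall>i. P (Suc i))"
  by (metis not0_implies_Suc)

lemma okl_iff_nth: "okl s b ls \<longleftrightarrow> (\<forall>i\<in>set ls. 1 \<le> i) \<and>
   (\<forall>i. Suc i < length ls \<longrightarrow> binof b (ls ! Suc i) + s + 1 \<le> binof b (ls ! i))"
proof (induction s b ls rule: okl.induct)
  case (3 s b x y r)
  have C: "(\<forall>i. Suc i < length (x#y#r) \<longrightarrow> binof b ((x#y#r) ! Suc i) + s + 1 \<le> binof b ((x#y#r) ! i))
    \<longleftrightarrow> binof b y + s + 1 \<le> binof b x \<and> (\<forall>i. Suc i < length (y#r) \<longrightarrow> binof b ((y#r) ! Suc i) + s + 1 \<le> binof b ((y#r) ! i))"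
    by (subst all_nat_split) simp
  show ?case unfolding C okl.simps(3) 3 list.set(2) Set.ball_simps(7) by blast
qed auto

lemma okl_tl: "okl s b (t # r) \<Longrightarrow> okl s b r"
  by (cases r) auto

lemma okl_hd: "okl s b (y # r) \<Longrightarrow> \<forall>z\<in>set r. binof b z + s + 1 \<le> binof b y"
proof (induction r arbitrary: y)
  case (Cons z r)
  have h1: "binof b z + s + 1 \<le> binof b y" and h2: "okl s b (z # r)" using Cons.prems by auto
  have "\<forall>w\<in>set r. binof b w + s + 1 \<le> binof b z" using Cons.IH h2 by blast
  then show ?case using h1 by force
qed auto

lemma okl_Cons: "okl s b (t # r) \<longleftrightarrow> 1 \<le> t \<and> okl s b r \<and> (\<forall>y\<in>set r. binof b y + s + 1 \<le> binof b t)"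
proof (cases r)
  case (Cons y r')
  show ?thesis
  proof
    assume h: "okl s b (t # r)"
    have "binof b z + s + 1 \<le> binof b t" if "z \<in> set r" for z
    proof -
      have "binof b z \<le> binof b y" using okl_hd[of s b y r'] h Cons that by auto
      moreover have "binof b y + s + 1 \<le> binof b t" using h Cons by auto
      ultimately show ?thesis by linarith
    qed
    thus "1 \<le> t \<and> okl s b r \<and> (\<forall>y\<in>set r. binof b y + s + 1 \<le> binof b t)"
      using h Cons by auto
  qed (use Cons in auto)
qed auto

lemma okl_pos: "okl s b ls \<Longrightarrow> x \<in> set ls \<Longrightarrow> 1 \<le> x"
proof -
  assume "okl s b ls" "x \<in> set ls"
  thus "1 \<le> x" unfolding okl_iff_nth[of s b ls] by auto
qed

lemma okl_lt_hd: "okl s b (t # r) \<Longrightarrow> y \<in> set r \<Longrightarrow> y < t"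
proof -
  assume h: "okl s b (t # r)" "y \<in> set r"
  hence "binof b y + s + 1 \<le> binof b t" using okl_Cons[of s b t r] by blast
  show "y < t"
  proof (rule ccontr)
    assume "\<not> y < t"
    hence "binof b t \<le> binof b y" using binof_mono by (simp add: not_less)
    thus False using \<open>binof b y + s + 1 \<le> binof b t\<close> by linarith
  qed
qed

locale genacci =
  fixes s b :: nat and a :: "nat \<Rightarrow> nat"
  assumes b1: "1 \<le> b" and gen: "is_generacci s b a"
begin

lemma a_smono: "1 \<le> i \<Longrightarrow> i < j \<Longrightarrow> a i < a j"
  using gen unfolding is_generacci_def by blast

lemma a_mono: "1 \<le> i \<Longrightarrow> i \<le> j \<Longrightarrow> a i \<le> a j"
  using a_smono by (metis le_eq_less_or_eq less_imp_le)

lemma a_inj: "1 \<le> i \<Longrightarrow> 1 \<le> j \<Longrightarrow> a i = a j \<Longrightarrow> i = j"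
  using a_smono by (metis linorder_neqE_nat less_irrefl)

lemma a_less_iff: "1 \<le> i \<Longrightarrow> 1 \<le> j \<Longrightarrow> a i < a j \<longleftrightarrow> i < j"
  using a_smono by (metis linorder_neqE_nat less_irrefl less_asym)

lemma mem_gbin: "1 \<le> l \<Longrightarrow> a l \<in> gbin b a t \<longleftrightarrow> t = int (binof b l)"
proof -
  assume l: "1 \<le> l"
  have "a l \<in> gbin b a t \<longleftrightarrow> (0 < t \<and> int b * (t - 1) + 1 \<le> int l \<and> int l \<le> int b * t)"
  proof
    assume "a l \<in> gbin b a t"
    then obtain i where i: "0 < t" "int b * (t - 1) + 1 \<le> int i" "int i \<le> int b * t" "a l = a i"
      unfolding gbin_def by (auto split: if_splits)
    have "0 \<le> int b * (t - 1)" using i(1) by simp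
    hence "1 \<le> i" using i(2) by linarith
    hence "i = l" using a_inj l i(4) by metis
    thus "0 < t \<and> int b * (t - 1) + 1 \<le> int l \<and> int l \<le> int b * t" using i by simp
  qed (auto simp: gbin_def)
  also have "\<dots> \<longleftrightarrow> t = int (binof b l)" using binof_int_iff b1 l by blast
  finally show ?thesis .
qed

lemma mem_union: "1 \<le> l \<Longrightarrow> a l \<in> (\<Union>t\<in>{j - int s..j}. gbin b a t) \<longleftrightarrow> j - int s \<le> int (binof b l) \<and> int (binof b l) \<le> j"
  using mem_gbin by auto

lemma pair_cond: "1 \<le> l1 \<Longrightarrow> 1 \<le> l2 \<Longrightarrow>
   (\<exists>j::int. {a l1, a l2} \<subseteq> (\<Union>t\<in>{j - int s..j}. gbin b a t)) \<longleftrightarrow>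
   \<bar>int (binof b l1) - int (binof b l2)\<bar> \<le> int s"
proof -
  assume l: "1 \<le> l1" "1 \<le> l2"
  have "(\<exists>j::int. {a l1, a l2} \<subseteq> (\<Union>t\<in>{j - int s..j}. gbin b a t)) \<longleftrightarrow>
     (\<exists>j::int. j - int s \<le> int (binof b l1) \<and> int (binof b l1) \<le> j \<and> j - int s \<le> int (binof b l2) \<and> int (binof b l2) \<le> j)"
    using mem_union[OF l(1)] mem_union[OF l(2)] by auto
  also have "\<dots> \<longleftrightarrow> \<bar>int (binof b l1) - int (binof b l2)\<bar> \<le> int s"
  proof
    assume "\<bar>int (binof b l1) - int (binof b l2)\<bar> \<le> int s"
    thus "\<exists>j::int. j - int s \<le> int (binof b l1) \<and> int (binof b l1) \<le> j \<and> j - int s \<le> int (binof b l2) \<and> int (binof b l2) \<le> j"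
      by (intro exI[of _ "max (int (binof b l1)) (int (binof b l2))"]) auto
  qed auto
  finally show ?thesis .
qed

lemma legal_iff: "legal_dec s b a ls \<longleftrightarrow> (\<forall>i\<in>set ls. 1 \<le> i) \<and>
   (\<forall>i. Suc i < length ls \<longrightarrow> binof b (ls ! Suc i) + s + 1 \<le> binof b (ls ! i))"
proof
  assume L: "legal_dec s b a ls"
  have pos: "\<forall>i\<in>set ls. 1 \<le> i" using L unfolding legal_dec_def by blast
  show "(\<forall>i\<in>set ls. 1 \<le> i) \<and> (\<forall>i. Suc i < length ls \<longrightarrow> binof b (ls ! Suc i) + s + 1 \<le> binof b (ls ! i))"
  proof (intro conjI pos allI impI)
    fix i assume i: "Suc i < length ls"
    have p1: "1 \<le> ls ! i" "1 \<le> ls ! Suc i" using pos i by auto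
    have "a (ls ! Suc i) < a (ls ! i)"
      using L i unfolding legal_dec_def by (auto simp: sorted_wrt_iff_nth_less)
    hence "ls ! Suc i < ls ! i" using a_less_iff p1 by blast
    hence m: "binof b (ls ! Suc i) \<le> binof b (ls ! i)" using binof_mono less_imp_le by blast
    have "\<not> (\<exists>j::int. {a (ls ! i), a (ls ! Suc i)} \<subseteq> (\<Union>t\<in>{j - int s..j}. gbin b a t))"
      using L i unfolding legal_dec_def by auto
    hence "\<not> \<bar>int (binof b (ls ! i)) - int (binof b (ls ! Suc i))\<bar> \<le> int s"
      using pair_cond p1 by blast
    thus "binof b (ls ! Suc i) + s + 1 \<le> binof b (ls ! i)" using m by linarith
  qed
next
  assume R: "(\<forall>i\<in>set ls. 1 \<le> i) \<and> (\<forall>i. Suc i < length ls \<longrightarrow> binof b (ls ! Suc i) + s + 1 \<le> binof b (ls ! i))"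
  have lt: "ls ! Suc i < ls ! i" if "Suc i < length ls" for i
  proof (rule ccontr)
    assume "\<not> ls ! Suc i < ls ! i"
    hence "binof b (ls ! i) \<le> binof b (ls ! Suc i)" using binof_mono by (simp add: not_less)
    thus False using R that by fastforce
  qed
  have "sorted_wrt (>) (map a ls)"
  proof (subst sorted_wrt_iff_nth_Suc_transp)
    show "transp ((>) :: nat \<Rightarrow> _)" by (auto simp: transp_def)
    show "\<forall>i. Suc i < length (map a ls) \<longrightarrow> map a ls ! i > map a ls ! Suc i"
    proof (intro allI impI)
      fix i assume i: "Suc i < length (map a ls)"
      have "1 \<le> ls ! Suc i" using R i by auto
      thus "map a ls ! i > map a ls ! Suc i" using lt[of i] i a_smono by auto
    qed
  qed
  moreover have "\<forall>i. i + 1 < length ls \<longrightarrow>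
        (\<forall>j::int. \<not> ({a (ls ! i), a (ls ! (i + 1))} \<subseteq> (\<Union>t\<in>{j - int s..j}. gbin b a t)))"
  proof (intro allI impI)
    fix i j assume i: "i + 1 < length ls"
    have p1: "1 \<le> ls ! i" "1 \<le> ls ! Suc i" using R i by auto
    have "binof b (ls ! Suc i) + s + 1 \<le> binof b (ls ! i)" using R i by auto
    hence "\<not> \<bar>int (binof b (ls ! i)) - int (binof b (ls ! Suc i))\<bar> \<le> int s" by linarith
    thus "\<not> ({a (ls ! i), a (ls ! (i + 1))} \<subseteq> (\<Union>t\<in>{j - int s..j}. gbin b a t))"
      using pair_cond[OF p1] by auto
  qed
  ultimately show "legal_dec s b a ls" using R unfolding legal_dec_def by blast
qed

lemma legal_okl: "legal_dec s b a ls \<longleftrightarrow> okl s b ls"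
  using legal_iff okl_iff_nth by blast

lemma binof_pos: "1 \<le> y \<Longrightarrow> 1 \<le> binof b y"
  using binof_le_iff[OF b1, of y 0] by simp

lemma okl_Cons': "okl s b (t # r) \<longleftrightarrow> 1 \<le> t \<and> okl s b r \<and> set r \<subseteq> {1..<b * (binof b t - (s + 1)) + 1}"
proof -
  have "(\<forall>y\<in>set r. binof b y + s + 1 \<le> binof b t) \<longleftrightarrow> set r \<subseteq> {1..<b * (binof b t - (s + 1)) + 1}"
    if "okl s b r"
  proof -
    have "binof b y + s + 1 \<le> binof b t \<longleftrightarrow> y \<le> b * (binof b t - (s + 1))" if "y \<in> set r" for y
    proof -
      have "1 \<le> binof b y" using binof_pos okl_pos \<open>okl s b r\<close> that by blast
      hence "binof b y + s + 1 \<le> binof b t \<longleftrightarrow> binof b y \<le> binof b t - (s + 1)" by linarith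
      thus ?thesis using binof_le_iff[OF b1] by simp
    qed
    thus ?thesis using okl_pos[OF that] by auto
  qed
  thus ?thesis using okl_Cons[of s b t r] by blast
qed

definition sm :: "nat list \<Rightarrow> nat" where "sm ls = sum_list (map a ls)"

definition Lst :: "nat \<Rightarrow> nat list set" where "Lst i = {ls. okl s b ls \<and> set ls \<subseteq> {1..<i}}"

lemma a_char: "1 \<le> i \<Longrightarrow> a i = (LEAST m. 0 < m \<and> \<not> has_legal_dec_below s b a i m)"
  using gen unfolding is_generacci_def by blast

lemma has_iff: "has_legal_dec_below s b a i m \<longleftrightarrow> m \<in> sm ` Lst i"
  unfolding has_legal_dec_below_def Lst_def sm_def legal_okl by auto

lemma a_eq: assumes "1 \<le> i" "sm ` Lst i = {0..<S}" "0 < S" shows "a i = S"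
proof -
  have "(LEAST m. 0 < m \<and> \<not> has_legal_dec_below s b a i m) = S"
    by (rule Least_equality) (use assms in \<open>auto simp: has_iff\<close>)
  thus ?thesis using a_char assms by simp
qed

lemma Lst_1: "Lst 1 = {[]}"
  unfolding Lst_def by auto

lemma lim_lt: "1 \<le> j \<Longrightarrow> b * (binof b j - (s + 1)) < j"
proof -
  assume j: "1 \<le> j"
  have "1 \<le> binof b j" using binof_pos j by blast
  hence "\<not> binof b j \<le> binof b j - 1" by linarith
  hence "b * (binof b j - 1) < j" using binof_le_iff[OF b1] by (simp add: not_le)
  moreover have "b * (binof b j - (s + 1)) \<le> b * (binof b j - 1)" by (intro mult_le_mono2) linarith
  ultimately show ?thesis by linarith
qed

lemma Lst_Suc: assumes j: "1 \<le> j"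
  shows "Lst (Suc j) = Lst j \<union> (Cons j) ` Lst (b * (binof b j - (s + 1)) + 1)"
proof
  show "Lst (Suc j) \<subseteq> Lst j \<union> (Cons j) ` Lst (b * (binof b j - (s + 1)) + 1)"
  proof
    fix ls assume ls: "ls \<in> Lst (Suc j)"
    show "ls \<in> Lst j \<union> (Cons j) ` Lst (b * (binof b j - (s + 1)) + 1)"
    proof (cases "j \<in> set ls")
      case False
      thus ?thesis using ls unfolding Lst_def by (auto simp: less_Suc_eq)
    next
      case True
      then obtain t r where tr: "ls = t # r" by (cases ls) auto
      have ok: "okl s b (t # r)" using ls tr unfolding Lst_def by auto
      have "t \<le> j" using ls tr unfolding Lst_def by auto
      moreover have "j \<le> t" using True tr okl_lt_hd[OF ok] by (auto simp: less_imp_le)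
      ultimately have "t = j" by simp
      thus ?thesis using ok tr okl_Cons' unfolding Lst_def by auto
    qed
  qed
next
  show "Lst j \<union> (Cons j) ` Lst (b * (binof b j - (s + 1)) + 1) \<subseteq> Lst (Suc j)"
  proof
    fix ls assume "ls \<in> Lst j \<union> (Cons j) ` Lst (b * (binof b j - (s + 1)) + 1)"
    thus "ls \<in> Lst (Suc j)"
    proof
      assume "ls \<in> Lst j" thus ?thesis unfolding Lst_def by auto
    next
      assume "ls \<in> (Cons j) ` Lst (b * (binof b j - (s + 1)) + 1)"
      then obtain r where r: "ls = j # r" "okl s b r" "set r \<subseteq> {1..<b * (binof b j - (s + 1)) + 1}"
        unfolding Lst_def by auto
      have "okl s b ls" using r okl_Cons' j by simp
      moreover have "set r \<subseteq> {1..<Suc j}" using r(3) lim_lt[OF j] by auto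
      ultimately show ?thesis using r j unfolding Lst_def by auto
    qed
  qed
qed

lemma main: "1 \<le> i \<Longrightarrow> inj_on sm (Lst i) \<and> sm ` Lst i = {0..<a i}"
proof (induction i rule: less_induct)
  case (less i)
  show ?case
  proof (cases "i = 1")
    case True
    have "sm ` Lst 1 = {0..<1}" using Lst_1 by (auto simp: sm_def)
    hence "a 1 = 1" using a_eq[of 1 1] by simp
    thus ?thesis using True Lst_1 by (auto simp: sm_def)
  next
    case False
    then obtain j where j: "i = Suc j" "1 \<le> j" using less.prems by (metis Suc_le_D Suc_le_lessD less_Suc_eq_le not_less_eq_eq le_antisym)
    define l where "l = b * (binof b j - (s + 1)) + 1"
    have l: "1 \<le> l" "l < i" using lim_lt[OF j(2)] j unfolding l_def by auto
    have IH1: "inj_on sm (Lst j)" "sm ` Lst j = {0..<a j}" using less.IH[of j] j by auto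
    have IH2: "inj_on sm (Lst l)" "sm ` Lst l = {0..<a l}" using less.IH[of l] l by auto
    have LS: "Lst i = Lst j \<union> (Cons j) ` Lst l" using Lst_Suc[OF j(2)] j l_def by simp
    have smc: "sm (j # r) = a j + sm r" for r by (simp add: sm_def)
    have img2: "sm ` (Cons j) ` Lst l = {a j..<a j + a l}"
    proof -
      have "sm ` (Cons j) ` Lst l = (\<lambda>x. a j + x) ` sm ` Lst l" by (auto simp: image_image smc)
      also have "\<dots> = {a j..<a j + a l}" using IH2(2) by (simp add: image_add_atLeastLessThan add.commute)
      finally show ?thesis .
    qed
    have img: "sm ` Lst i = {0..<a j + a l}" using LS IH1(2) img2 by (auto simp: image_Un)
    have "[] \<in> Lst l" unfolding Lst_def by simp
    hence "0 < a l" using IH2(2) by (metis atLeastLessThan_iff imageI less_nat_zero_code not_gr_zero)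
    hence ai: "a i = a j + a l" using a_eq[of i "a j + a l"] img j by simp
    have "inj_on sm (Lst i)"
    proof -
      have "inj_on sm ((Cons j) ` Lst l)"
        using IH2(1) by (auto simp: inj_on_def smc)
      moreover have "sm ` Lst j \<inter> sm ` (Cons j) ` Lst l = {}" using IH1(2) img2 by auto
      hence "sm ` (Lst j - (Cons j) ` Lst l) \<inter> sm ` ((Cons j) ` Lst l - Lst j) = {}" by blast
      ultimately show ?thesis unfolding LS inj_on_Un using IH1(1) by blast
    qed
    thus ?thesis using img ai by simp
  qed
qed

end



context genacci begin

lemma sm_lt_iff: assumes "okl s b ls" "1 \<le> i" shows "sm ls < a i \<longleftrightarrow> set ls \<subseteq> {1..<i}"
proof
  assume "set ls \<subseteq> {1..<i}"
  hence "ls \<in> Lst i" using assms unfolding Lst_def by auto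
  thus "sm ls < a i" using main[OF assms(2)] by auto
next
  assume h: "sm ls < a i"
  show "set ls \<subseteq> {1..<i}"
  proof
    fix x assume x: "x \<in> set ls"
    have x1: "1 \<le> x" using okl_pos assms(1) x by blast
    have "a x \<le> sm ls" unfolding sm_def using x by (simp add: member_le_sum_list)
    hence "\<not> i \<le> x" using h a_mono[OF assms(2)] by (meson le_trans not_le)
    thus "x \<in> {1..<i}" using x1 by simp
  qed
qed

lemma sm_inj: assumes "okl s b l1" "okl s b l2" "sm l1 = sm l2" shows "l1 = l2"
proof -
  define i where "i = Suc (Max (set l1 \<union> set l2))"
  have "l1 \<in> Lst i" "l2 \<in> Lst i" using assms okl_pos unfolding Lst_def i_def
    by (auto simp: le_imp_less_Suc)
  thus ?thesis using main[of i] assms(3) unfolding i_def by (auto dest: inj_onD)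
qed

lemma gen_at_nat: "1 \<le> j \<Longrightarrow> gen_at a (int j) = a j"
  unfolding gen_at_def by simp

lemma gen_at_up: "gen_at a (int n * int b + 1) = a (n * b + 1)"
proof -
  have eq: "int n * int b + 1 = int (n * b + 1)" by simp
  show ?thesis unfolding eq by (rule gen_at_nat) simp
qed

lemma gen_at_low: "1 \<le> n \<Longrightarrow> gen_at a ((int n - 1) * int b + 1) = a ((n - 1) * b + 1)"
proof -
  assume "1 \<le> n"
  hence eq: "(int n - 1) * int b + 1 = int ((n - 1) * b + 1)" by (simp add: of_nat_diff)
  show ?thesis unfolding eq by (rule gen_at_nat) simp
qed

definition Lk :: "nat \<Rightarrow> nat \<Rightarrow> nat list set" where
  "Lk i k = {ls. okl s b ls \<and> set ls \<subseteq> {1..<i} \<and> length ls = k}"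

lemma Lk_finite: "finite (Lk i k)"
proof -
  have "Lk i k \<subseteq> {xs. set xs \<subseteq> {1..<i} \<and> length xs = k}" unfolding Lk_def by auto
  thus ?thesis using finite_lists_length_eq[of "{1..<i}" k] finite_subset by auto
qed

lemma dec_len_iff: "dec_len s b a m k \<longleftrightarrow> (\<exists>ls. okl s b ls \<and> sm ls = m \<and> length ls = k)"
  unfolding dec_len_def sm_def legal_okl by auto

lemma inj_sm_Lk: "inj_on sm (Lk i k)"
  using sm_inj unfolding Lk_def by (auto intro: inj_onI)

lemma set_lt: "1 \<le> i \<Longrightarrow> {m. m < a i \<and> dec_len s b a m k} = sm ` Lk i k"
  unfolding dec_len_iff Lk_def using sm_lt_iff by auto

lemma q_card: "gen_q s b a n k = card (Lk (n * b + 1) k)"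
proof -
  have g: "gen_at a (int n * int b + 1) = a (n * b + 1)" by (rule gen_at_up)
  have "{m. m < a (n * b + 1) \<and> dec_len s b a m k} = sm ` Lk (n * b + 1) k" by (rule set_lt) simp
  thus ?thesis unfolding gen_q_def g by (simp add: card_image inj_sm_Lk)
qed

lemma Lk_1: "Lk 1 k = (if k = 0 then {[]} else {})"
  unfolding Lk_def by auto

lemma q0: "gen_q s b a 0 k = (if k = 0 then 1 else 0)"
  using q_card[of 0 k] Lk_1 by simp

lemma p0: "gen_p s b a 0 k = (if k = 0 then 1 else 0)"
proof -
  have g1: "gen_at a ((int 0 - 1) * int b + 1) = 0" using b1 unfolding gen_at_def by simp
  have g2: "gen_at a (int 0 * int b + 1) = a 1" unfolding gen_at_def by simp
  have "gen_p s b a 0 k = card {m. m < a 1 \<and> dec_len s b a m k}"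
    unfolding gen_p_def g1 g2 by simp
  also have "\<dots> = card (Lk 1 k)" using set_lt[of 1 k] card_image[OF inj_sm_Lk] by simp
  finally show ?thesis using Lk_1 by simp
qed

definition PS :: "nat \<Rightarrow> nat \<Rightarrow> nat list set" where
  "PS n k = {ls \<in> Lk (n * b + 1) k. \<not> set ls \<subseteq> {1..<(n - 1) * b + 1}}"

lemma p_card: assumes "1 \<le> n" shows "gen_p s b a n k = card (PS n k)"
proof -
  have g1: "gen_at a ((int n - 1) * int b + 1) = a ((n - 1) * b + 1)" using assms by (rule gen_at_low)
  have g2: "gen_at a (int n * int b + 1) = a (n * b + 1)" by (rule gen_at_up)
  have "{m. a ((n - 1) * b + 1) \<le> m \<and> m < a (n * b + 1) \<and> dec_len s b a m k} = sm ` PS n k"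
  proof -
    have "{m. a ((n - 1) * b + 1) \<le> m \<and> m < a (n * b + 1) \<and> dec_len s b a m k}
      = {m. m < a (n * b + 1) \<and> dec_len s b a m k} - {m. m < a ((n - 1) * b + 1) \<and> dec_len s b a m k}"
      by auto
    also have "\<dots> = sm ` Lk (n * b + 1) k - sm ` Lk ((n - 1) * b + 1) k"
      using set_lt by simp
    also have "\<dots> = sm ` PS n k"
    proof -
      have "(n - 1) * b \<le> n * b" by (simp add: mult_le_mono1)
      hence "{1..<(n - 1) * b + 1} \<subseteq> {1..<n * b + 1}" by auto
      hence sub: "Lk ((n - 1) * b + 1) k \<subseteq> Lk (n * b + 1) k" unfolding Lk_def by blast
      have "inj_on sm (Lk (n * b + 1) k)" by (rule inj_sm_Lk)
      hence "sm ` Lk (n * b + 1) k - sm ` Lk ((n - 1) * b + 1) k = sm ` (Lk (n * b + 1) k - Lk ((n - 1) * b + 1) k)"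
        using sub by (simp add: inj_on_image_set_diff)
      moreover have "Lk (n * b + 1) k - Lk ((n - 1) * b + 1) k = PS n k"
        unfolding PS_def Lk_def by auto
      ultimately show ?thesis by simp
    qed
    finally show ?thesis .
  qed
  moreover have "inj_on sm (PS n k)" using inj_sm_Lk unfolding PS_def by (auto intro: inj_on_subset)
  ultimately show ?thesis unfolding gen_p_def g1 g2 by (simp add: card_image)
qed

lemma PS_diff: "PS n k = Lk (n * b + 1) k - Lk ((n - 1) * b + 1) k"
  unfolding PS_def Lk_def by auto

lemma Lk_mono: "Lk ((n - 1) * b + 1) k \<subseteq> Lk (n * b + 1) k"
proof -
  have "(n - 1) * b \<le> n * b" by (simp add: mult_le_mono1)
  hence "{1..<(n - 1) * b + 1} \<subseteq> {1..<n * b + 1}" by auto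
  thus ?thesis unfolding Lk_def by blast
qed

lemma q_rec: assumes "1 \<le> m" shows "gen_q s b a m k = gen_q s b a (m - 1) k + gen_p s b a m k"
proof -
  have "card (PS m k) = card (Lk (m * b + 1) k) - card (Lk ((m - 1) * b + 1) k)"
    unfolding PS_diff using Lk_mono Lk_finite by (simp add: card_Diff_subset)
  moreover have "card (Lk ((m - 1) * b + 1) k) \<le> card (Lk (m * b + 1) k)"
    using Lk_mono Lk_finite by (simp add: card_mono)
  ultimately show ?thesis using q_card p_card[OF assms] by simp
qed

lemma binof_in_bin: assumes "1 \<le> n" "(n - 1) * b + 1 \<le> t" "t \<le> n * b" shows "binof b t = n"
proof -
  have "binof b t \<le> n" using binof_le_iff[OF b1] assms(3) by (simp add: mult.commute)
  moreover have "\<not> binof b t \<le> n - 1" using binof_le_iff[OF b1] assms(2) by (simp add: mult.commute)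
  ultimately show ?thesis by linarith
qed

lemma PS_0: "PS n 0 = {}"
  unfolding PS_def Lk_def by auto

lemma PS_eq: assumes n: "1 \<le> n" and k: "1 \<le> k"
  shows "PS n k = (\<lambda>(t, r). t # r) ` ({(n - 1) * b + 1..n * b} \<times> Lk ((n - (s + 1)) * b + 1) (k - 1))"
proof
  show "PS n k \<subseteq> (\<lambda>(t, r). t # r) ` ({(n - 1) * b + 1..n * b} \<times> Lk ((n - (s + 1)) * b + 1) (k - 1))"
  proof
    fix ls assume ls: "ls \<in> PS n k"
    then obtain t r where tr: "ls = t # r" unfolding PS_def by (cases ls) auto
    have ok: "okl s b (t # r)" and sub: "set (t # r) \<subseteq> {1..<n * b + 1}" and len: "length (t # r) = k"
      and ns: "\<not> set (t # r) \<subseteq> {1..<(n - 1) * b + 1}"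
      using ls tr unfolding PS_def Lk_def by auto
    have t1: "t \<le> n * b" using sub by auto
    obtain x where x0: "x \<in> set (t # r)" "x \<notin> {1..<(n - 1) * b + 1}"
      using ns by blast
    have x: "x \<in> set (t # r)" "\<not> x < (n - 1) * b + 1" using x0 okl_pos[OF ok x0(1)] by auto
    have "x \<le> t" using x(1) okl_lt_hd[OF ok] by (auto simp: less_imp_le)
    hence t2: "(n - 1) * b + 1 \<le> t" using x(2) by linarith
    have bt: "binof b t = n" using binof_in_bin[OF n t2 t1] .
    have "okl s b r \<and> set r \<subseteq> {1..<b * (n - (s + 1)) + 1}" using okl_Cons'[of t r] ok bt by simp
    hence "r \<in> Lk ((n - (s + 1)) * b + 1) (k - 1)" using len unfolding Lk_def by (auto simp: mult.commute)
    thus "ls \<in> (\<lambda>(t, r). t # r) ` ({(n - 1) * b + 1..n * b} \<times> Lk ((n - (s + 1)) * b + 1) (k - 1))"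
      using tr t1 t2 by force
  qed
next
  show "(\<lambda>(t, r). t # r) ` ({(n - 1) * b + 1..n * b} \<times> Lk ((n - (s + 1)) * b + 1) (k - 1)) \<subseteq> PS n k"
  proof
    fix ls assume "ls \<in> (\<lambda>(t, r). t # r) ` ({(n - 1) * b + 1..n * b} \<times> Lk ((n - (s + 1)) * b + 1) (k - 1))"
    then obtain t r where tr: "ls = t # r" "(n - 1) * b + 1 \<le> t" "t \<le> n * b"
      "r \<in> Lk ((n - (s + 1)) * b + 1) (k - 1)" by auto
    have bt: "binof b t = n" using binof_in_bin[OF n tr(2,3)] .
    have r: "okl s b r" "set r \<subseteq> {1..<b * (n - (s + 1)) + 1}" "length r = k - 1"
      using tr(4) unfolding Lk_def by (auto simp: mult.commute)
    have ok: "okl s b (t # r)" using okl_Cons'[of t r] r bt tr(2) by simp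
    have "set (t # r) \<subseteq> {1..<n * b + 1}"
      using okl_lt_hd[OF ok] tr(2,3) okl_pos[OF ok] by fastforce
    moreover have "\<not> set (t # r) \<subseteq> {1..<(n - 1) * b + 1}" using tr(2) by auto
    ultimately show "ls \<in> PS n k" unfolding PS_def Lk_def using ok r(3) k tr(1) by auto
  qed
qed

lemma p_rec: assumes n: "1 \<le> n"
  shows "gen_p s b a n k = (if k = 0 then 0 else b * gen_q s b a (n - (s + 1)) (k - 1))"
proof (cases "k = 0")
  case True thus ?thesis using p_card[OF n] PS_0 by simp
next
  case False
  hence k: "1 \<le> k" by simp
  have inj: "inj_on (\<lambda>(t, r). t # r) X" for X :: "(nat \<times> nat list) set"
    by (auto simp: inj_on_def)
  have c: "card {(n - 1) * b + 1..n * b} = b"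
  proof -
    have "n * b = (n - 1) * b + b" using n by (cases n) auto
    thus ?thesis by simp
  qed
  have "gen_p s b a n k = card ({(n - 1) * b + 1..n * b} \<times> Lk ((n - (s + 1)) * b + 1) (k - 1))"
    using p_card[OF n] PS_eq[OF n k] card_image[OF inj] by simp
  also have "\<dots> = b * gen_q s b a (n - (s + 1)) (k - 1)"
    using c q_card by (simp add: card_cartesian_product)
  finally show ?thesis using False by simp
qed

lemma okl_len: "okl s b (t # r) \<Longrightarrow> 1 + length r * (s + 1) \<le> binof b t"
proof (induction r arbitrary: t)
  case Nil thus ?case using binof_pos by simp
next
  case (Cons y r)
  have "1 + length r * (s + 1) \<le> binof b y" using Cons.IH okl_tl Cons.prems by blast
  moreover have "binof b y + s + 1 \<le> binof b t" using Cons.prems by simp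
  ultimately show ?case by simp
qed

lemma q_zero: assumes "gen_q s b a m L \<noteq> 0" "1 \<le> L" shows "1 + (L - 1) * (s + 1) \<le> m"
proof -
  have "Lk (m * b + 1) L \<noteq> {}" using assms q_card by auto
  then obtain ls where ls: "okl s b ls" "set ls \<subseteq> {1..<m * b + 1}" "length ls = L" unfolding Lk_def by auto
  then obtain t r where tr: "ls = t # r" using assms(2) by (cases ls) auto
  have "t \<le> m * b" using ls(2) tr by auto
  hence "binof b t \<le> m" using binof_le_iff[OF b1] by (simp add: mult.commute)
  moreover have "1 + length r * (s + 1) \<le> binof b t" using okl_len[of t r] ls tr by simp
  moreover have "L - 1 = length r" using ls tr by simp
  ultimately show ?thesis by simp
qed

end


context genacci begin

lemma coef_id: assumes s1: "1 \<le> s" shows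
  "real (gen_p s b a n k) - (if n = 0 then 0 else real (gen_p s b a (n - 1) k))
    - (if s + 1 \<le> n \<and> k \<noteq> 0 then real b * real (gen_p s b a (n - (s + 1)) (k - 1)) else 0)
   = (if n = 0 \<and> k = 0 then 1 else 0) - (if n = 1 \<and> k = 0 then 1 else 0)
    - (if n = s + 1 \<and> k = 1 then real b else 0) + (if n = 1 \<and> k = 1 then real b else 0)"
proof (cases "n = 0")
  case True thus ?thesis using p0 by simp
next
  case n0: False
  hence n: "1 \<le> n" by simp
  show ?thesis
  proof (cases "k = 0")
    case True
    have "gen_p s b a (n - 1) 0 = (if n = 1 then 1 else 0)"
    proof (cases "n = 1")
      case True thus ?thesis using p0 by simp
    next
      case False thus ?thesis using p_rec[of "n - 1" 0] n by simp
    qed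
    thus ?thesis using True p_rec[OF n, of 0] n0 by simp
  next
    case k0: False
    have pn: "gen_p s b a n k = b * gen_q s b a (n - (s + 1)) (k - 1)" using p_rec[OF n] k0 by simp
    show ?thesis
    proof (cases "n = 1")
      case True
      thus ?thesis using pn q0 p0 k0 s1 by auto
    next
      case n1: False
      have pn1: "gen_p s b a (n - 1) k = b * gen_q s b a (n - 1 - (s + 1)) (k - 1)"
        using p_rec[of "n - 1"] n n1 k0 by simp
      show ?thesis
      proof (cases "n \<le> s")
        case True
        have "n - (s + 1) = 0" "n - 1 - (s + 1) = 0" using True by auto
        thus ?thesis using pn pn1 True n0 n1 k0 by auto
      next
        case False
        show ?thesis
        proof (cases "n = s + 1")
          case True
          have "n - (s + 1) = 0" "n - 1 - (s + 1) = 0" using True by auto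
          hence "gen_p s b a n k = gen_p s b a (n - 1) k" using pn pn1 by simp
          thus ?thesis using True p0[of "k - 1"] k0 s1 by auto
        next
          case ns: False
          define m where "m = n - (s + 1)"
          have m1: "1 \<le> m" using False ns unfolding m_def by simp
          have "n - 1 - (s + 1) = m - 1" unfolding m_def by simp
          hence "gen_p s b a n k = gen_p s b a (n - 1) k + b * gen_p s b a m (k - 1)"
            using pn pn1 q_rec[OF m1, of "k - 1"] unfolding m_def by (simp add: algebra_simps)
          thus ?thesis using False ns k0 n0 n1 unfolding m_def by auto
        qed
      qed
    qed
  qed
qed

lemma kle_iff: "real k \<le> real (n + s) / real (s + 1) \<longleftrightarrow> k * (s + 1) \<le> n + s"
proof -
  have "real k \<le> real (n + s) / real (s + 1) \<longleftrightarrow> real k * real (s + 1) \<le> real (n + s)"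
    by (simp add: pos_le_divide_eq)
  also have "\<dots> \<longleftrightarrow> k * (s + 1) \<le> n + s" by (simp only: of_nat_mult[symmetric] of_nat_le_iff)
  finally show ?thesis .
qed

lemma formula: "gen_p s b a n k =
            (if n = 0 \<and> k = 0 then 1
             else if 1 \<le> n \<and> n \<le> s \<and> k = 1 then b
             else if s + 1 \<le> n \<and> 1 \<le> k \<and> real k \<le> real (n + s) / real (s + 1)
               then b * gen_q s b a (n - (s + 1)) (k - 1)
             else 0)"
proof (cases "n = 0")
  case True thus ?thesis using p0 by simp
next
  case n0: False
  hence n: "1 \<le> n" by simp
  show ?thesis
  proof (cases "k = 0")
    case True thus ?thesis using p_rec[OF n] n0 by simp
  next
    case k0: False
    have pn: "gen_p s b a n k = b * gen_q s b a (n - (s + 1)) (k - 1)" using p_rec[OF n] k0 by simp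
    show ?thesis
    proof (cases "n \<le> s")
      case True
      hence "n - (s + 1) = 0" by simp
      thus ?thesis using pn q0 True n0 k0 by auto
    next
      case False
      show ?thesis
      proof (cases "real k \<le> real (n + s) / real (s + 1)")
        case True thus ?thesis using pn False n0 k0 by auto
      next
        case kb: False
        have "gen_q s b a (n - (s + 1)) (k - 1) = 0"
        proof (rule ccontr)
          assume q: "gen_q s b a (n - (s + 1)) (k - 1) \<noteq> 0"
          show False
          proof (cases "k = 1")
            case True thus False using kb kle_iff n by simp
          next
            case False
            hence "1 + (k - 1 - 1) * (s + 1) \<le> n - (s + 1)" using q_zero[OF q] k0 by simp
            hence "k * (s + 1) \<le> n + s" using False k0 \<open>\<not> n \<le> s\<close>
              by (cases k) (auto simp: algebra_simps)
            thus False using kb kle_iff by simp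
          qed
        qed
        thus ?thesis using pn kb False n0 by auto
      qed
    qed
  qed
qed

lemma p_nonzero: assumes "gen_p s b a n k \<noteq> 0" shows "k \<le> nat \<lceil>real (n + s) / real (s + 1)\<rceil>"
proof -
  have "real k \<le> real (n + s) / real (s + 1)"
  proof (cases "n = 0")
    case True thus ?thesis using assms p0 by (auto split: if_splits)
  next
    case False
    hence k: "k \<noteq> 0" using assms p_rec[of n k] by (auto split: if_splits)
    show ?thesis
    proof (cases "k = 1")
      case True thus ?thesis using False kle_iff by simp
    next
      case k1: False
      have q: "gen_q s b a (n - (s + 1)) (k - 1) \<noteq> 0" using assms p_rec[of n k] False k by auto
      have "1 + (k - 1 - 1) * (s + 1) \<le> n - (s + 1)" using q_zero[OF q] k k1 by simp
      hence "k * (s + 1) \<le> n + s" using k k1 by (cases k) (auto simp: algebra_simps)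
      thus ?thesis using kle_iff by simp
    qed
  qed
  also have "\<dots> \<le> of_int \<lceil>real (n + s) / real (s + 1)\<rceil>" by (rule le_of_int_ceiling)
  finally have "int k \<le> \<lceil>real (n + s) / real (s + 1)\<rceil>" by linarith
  thus ?thesis by linarith
qed

lemma bX_nth: "fps_nth ((of_nat b :: real fps) * fps_X * G) k = real b * (if k = 0 then 0 else fps_nth G (k - 1))"
proof -
  have e: "(of_nat b :: real fps) = fps_const (real b)" by (simp add: fps_of_nat)
  have "(of_nat b :: real fps) * fps_X * G = fps_const (real b) * (fps_X * G)"
    by (simp only: e mult.assoc)
  show ?thesis unfolding \<open>(of_nat b :: real fps) * fps_X * G = fps_const (real b) * (fps_X * G)\<close> by simp
qed

lemma gf: assumes s1: "1 \<le> s" shows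
  "(Abs_fps (\<lambda>n. Abs_fps (\<lambda>k.
              if k \<le> nat \<lceil>real (n + s) / real (s + 1)\<rceil> then real (gen_p s b a n k) else 0))
            :: real fps fps)
         = 1 + fps_const (of_nat b * fps_X) * fps_X
               * inverse (1 - fps_X - fps_const (of_nat b * fps_X) * fps_X ^ (s + 1))"
proof -
  define P where "P n = Abs_fps (\<lambda>k. real (gen_p s b a n k))" for n
  define F :: "real fps fps" where "F = Abs_fps P"
  define c :: "real fps fps" where "c = fps_const (of_nat b * fps_X)"
  define D :: "real fps fps" where "D = 1 - fps_X - c * fps_X ^ (s + 1)"
  have Feq: "(Abs_fps (\<lambda>n. Abs_fps (\<lambda>k.
              if k \<le> nat \<lceil>real (n + s) / real (s + 1)\<rceil> then real (gen_p s b a n k) else 0))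
            :: real fps fps) = F"
    unfolding F_def P_def
    by (rule fps_ext, simp, rule fps_ext, simp) (use p_nonzero in fastforce)
  have alg: "F * D = F - fps_X * F - c * (fps_X ^ (s + 1) * F)"
    unfolding D_def by (simp add: algebra_simps)
  have key: "F * D = D + c * fps_X"
  proof (rule fps_ext)
    fix n
    show "fps_nth (F * D) n = fps_nth (D + c * fps_X) n"
    proof (rule fps_ext)
      fix k
      show "fps_nth (fps_nth (F * D) n) k = fps_nth (fps_nth (D + c * fps_X) n) k"
      proof -
        have e1: "fps_nth (fps_nth (F * D) n) k = real (gen_p s b a n k) - (if n = 0 then 0 else real (gen_p s b a (n - 1) k))
          - (if s + 1 \<le> n \<and> k \<noteq> 0 then real b * real (gen_p s b a (n - (s + 1)) (k - 1)) else 0)"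
        proof -
          have h: "fps_nth (fps_X ^ (s + 1) * F) n = (if n < s + 1 then 0 else P (n - (s + 1)))"
            by (simp only: fps_X_power_mult_nth F_def fps_nth_Abs_fps)
          have h2: "fps_nth (fps_X * F) n = (if n = 0 then 0 else P (n - 1))"
            by (simp only: fps_X_mult_nth F_def fps_nth_Abs_fps)
          have h3: "fps_nth (F * D) n = P n - (if n = 0 then 0 else P (n - 1))
                - (of_nat b * fps_X) * (if n < s + 1 then 0 else P (n - (s + 1)))"
            unfolding alg fps_sub_nth h2 unfolding c_def fps_mult_left_const_nth h
            by (simp add: F_def)
          show ?thesis unfolding h3 by (simp add: bX_nth P_def not_less)
        qed
        have e2: "fps_nth (fps_nth (D + c * fps_X) n) k = (if n = 0 \<and> k = 0 then 1 else 0) - (if n = 1 \<and> k = 0 then 1 else 0)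
          - (if n = s + 1 \<and> k = 1 then real b else 0) + (if n = 1 \<and> k = 1 then real b else 0)"
          unfolding D_def c_def using s1
          by (simp add: bX_nth) arith
        show ?thesis using e1 e2 coef_id[OF s1, of n k] by simp
      qed
    qed
  qed
  have D0: "fps_nth D 0 = 1" unfolding D_def c_def by simp
  have inv: "D * inverse D = 1"
  proof -
    have "inverse D = fps_right_inverse D (inverse (fps_nth D 0))" by (simp add: fps_inverse_def)
    also have "\<dots> = fps_right_inverse D 1" using D0 by simp
    finally show ?thesis using fps_right_inverse[of D 1] D0 by simp
  qed
  have "F = F * (D * inverse D)" using inv by simp
  also have "\<dots> = (F * D) * inverse D" by (simp add: mult.assoc)
  also have "\<dots> = 1 + c * fps_X * inverse D" unfolding key using inv by (simp add: algebra_simps)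
  finally show ?thesis using Feq unfolding c_def D_def by simp
qed

end

theorem proposition2p13:
  fixes s b :: nat and a :: "nat \<Rightarrow> nat"
  assumes "1 \<le> s" and "1 \<le> b"
    and "is_generacci s b a"
  shows "(\<forall>n k. gen_p s b a n k =
            (if n = 0 \<and> k = 0 then 1
             else if 1 \<le> n \<and> n \<le> s \<and> k = 1 then b
             else if s + 1 \<le> n \<and> 1 \<le> k \<and> real k \<le> real (n + s) / real (s + 1)
               then b * gen_q s b a (n - (s + 1)) (k - 1)
             else 0))
       \<and> (Abs_fps (\<lambda>n. Abs_fps (\<lambda>k.
              if k \<le> nat \<lceil>real (n + s) / real (s + 1)\<rceil> then real (gen_p s b a n k) else 0))
            :: real fps fps)
         = 1 + fps_const (of_nat b * fps_X) * fps_X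
               * inverse (1 - fps_X - fps_const (of_nat b * fps_X) * fps_X ^ (s + 1))"
proof -
  interpret genacci s b a using assms(2,3) by unfold_locales
  show ?thesis using formula gf[OF assms(1)] by blast
qed

end
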